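(* Let $1<p\le s<\infty$ and $x\in\ell^{p,s}$. Then $$\zeta\!\left(\tfrac{s}{p'}+1\right)^{1/s}\|x\|_{p,s}\;\le\;\|x\|^*_{p,s}\;\le\;p'\,\|x\|_{p,s},$$ where $\zeta$ is the Riemann zeta function and $1/p+1/p'=1$. Both constants are optimal.
   Context: For a complex sequence $x=(x_n)_{n\ge1}$, $x^*$ denotes the nonincreasing rearrangement of $(|x_n|)_n$. For $1<p<\infty$, $1\le s<\infty$: $\|x\|_{p,s}=\bigl(\sum_{n=1}^\infty n^{s/p-1}(x_n^* )^s\bigr)^{1/s}$, and $\ell^{p,s}$ is the space of sequences with $\|x\|_{p,s}<\infty$. The maximal Lorentz norm is $\|x\|^*_{p,s}=\bigl(\sum_{n=1}^\infty n^{s/p-1}\bigl(\frac1n\sum_{k=1}^n x_k^*\bigr)^s\bigr)^{1/s}$. Here $1/p+1/p'=1$. *)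

theory Defs
  imports "HOL-Analysis.Analysis"
begin

text \<open>Sequences x = (x_n)_{n>=1} are modelled as functions nat => complex;
  the value at index 0 is ignored.\<close>

definition dist_count :: "(nat \<Rightarrow> complex) \<Rightarrow> real \<Rightarrow> nat set" where
  "dist_count x t = {k. 1 \<le> k \<and> t < norm (x k)}"

definition rearr :: "(nat \<Rightarrow> complex) \<Rightarrow> nat \<Rightarrow> real" where
  "rearr x n = Inf {t. 0 \<le> t \<and> finite (dist_count x t) \<and> card (dist_count x t) < n}"

definition lorentz_terms :: "real \<Rightarrow> real \<Rightarrow> (nat \<Rightarrow> complex) \<Rightarrow> nat \<Rightarrow> real" where
  "lorentz_terms p s x n = real (Suc n) powr (s / p - 1) * (rearr x (Suc n)) powr s"

definition lorentz_norm :: "real \<Rightarrow> real \<Rightarrow> (nat \<Rightarrow> complex) \<Rightarrow> real" where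
  "lorentz_norm p s x = (\<Sum>n. lorentz_terms p s x n) powr (1 / s)"

text \<open>Membership in l^{p,s}; the condition x_n -> 0 is automatic for finite norm
  (otherwise x* is bounded below by a positive constant and the series diverges),
  and it guarantees that the rearrangement is well defined.\<close>
definition in_lorentz :: "real \<Rightarrow> real \<Rightarrow> (nat \<Rightarrow> complex) \<Rightarrow> bool" where
  "in_lorentz p s x \<longleftrightarrow> ((\<lambda>n. norm (x n)) \<longlonglongrightarrow> 0) \<and> summable (lorentz_terms p s x)"

definition max_lorentz_terms :: "real \<Rightarrow> real \<Rightarrow> (nat \<Rightarrow> complex) \<Rightarrow> nat \<Rightarrow> real" where
  "max_lorentz_terms p s x n = real (Suc n) powr (s / p - 1) *
     ((\<Sum>k=1..Suc n. rearr x k) / real (Suc n)) powr s"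

definition max_lorentz_norm :: "real \<Rightarrow> real \<Rightarrow> (nat \<Rightarrow> complex) \<Rightarrow> real" where
  "max_lorentz_norm p s x = (\<Sum>n. max_lorentz_terms p s x n) powr (1 / s)"

definition zeta_real :: "real \<Rightarrow> real" where
  "zeta_real a = (\<Sum>n. 1 / real (Suc n) powr a)"

definition conj_exp :: "real \<Rightarrow> real" where
  "conj_exp p = p / (p - 1)"

end

theory Submission
  imports Defs
begin


lemma young_gen:
  fixes s lam x y :: real
  assumes "s > 1" "lam > 0" "x \<ge> 0" "y \<ge> 0"
  shows "x powr (s-1) * y \<le> (s-1)/s * lam * x powr s + 1/s * lam powr (1-s) * y powr s"
proof (cases "x = 0 \<or> y = 0")
  case True
  then show ?thesis using assms by (auto intro!: add_nonneg_nonneg mult_nonneg_nonneg)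
next
  case False
  then have xy: "x > 0" "y > 0" using assms by auto
  have "(lam * x powr s) powr ((s-1)/s) * (lam powr (1-s) * y powr s) powr (1/s)
      \<le> (s-1)/s * (lam * x powr s) + 1/s * (lam powr (1-s) * y powr s)"
    using assms xy by (intro Youngs_inequality_0) (auto simp: field_simps)
  moreover have "(lam * x powr s) powr ((s-1)/s) * (lam powr (1-s) * y powr s) powr (1/s)
       = x powr (s-1) * y"
  proof -
    have "(lam * x powr s) powr ((s-1)/s) = lam powr ((s-1)/s) * x powr (s-1)"
      using assms xy by (simp add: powr_mult powr_powr)
    moreover have "(lam powr (1-s) * y powr s) powr (1/s) = lam powr ((1-s)/s) * y"
      using assms xy by (simp add: powr_mult powr_powr)
    moreover have "lam powr ((s-1)/s) * lam powr ((1-s)/s) = 1"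
      using assms by (simp add: powr_add[symmetric] field_simps)
    ultimately show ?thesis by (metis (no_types, lifting) mult.assoc mult.commute mult_1)
  qed
  ultimately show ?thesis by (simp add: mult.assoc)
qed

lemma bern_powr:
  fixes x b :: real
  assumes "0 \<le> b" "b \<le> 1" "x > -1"
  shows "(1+x) powr b \<le> 1 + b*x"
proof -
  have "(1+x) powr b * 1 powr (1-b) \<le> b*(1+x) + (1-b)*1"
    using assms by (intro Youngs_inequality_0) auto
  then show ?thesis by (simp add: algebra_simps)
qed



lemma hardy_step:
  fixes p s m B B' :: real
  assumes p: "1 < p" "p \<le> s" and m: "m > 0" and B: "B \<ge> 0" "B' \<ge> 0"
  defines "q \<equiv> p/(p-1)" and "r \<equiv> s/p"
  shows "(m+1) powr (r-1) * B powr s - q * (m+1) powr (r-1) * ((m+1)*B - m*B') * B powr (s-1)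
     \<le> (q/s) * (m powr r * B' powr s - (m+1) powr r * B powr s)"
proof -
  define n where "n = m + 1"
  define \<beta> where "\<beta> = (r-1)/(s-1)"
  define lam where "lam = 1 + \<beta>/m"
  define w where "w = n powr (r-1)"
  have s1: "s > 1" using p by auto
  have r1: "r \<ge> 1" using p by (simp add: r_def)
  have q0: "q > 0" using p by (simp add: q_def)
  have b0: "0 \<le> \<beta>" "\<beta> \<le> 1" using p s1 r1 by (auto simp: \<beta>_def r_def field_simps)
  have lam0: "lam > 0" using b0 m by (simp add: lam_def add_pos_nonneg)
  have n0: "n > 0" using m by (simp add: n_def)
  have Y: "B powr (s-1) * B' \<le> (s-1)/s * lam * B powr s + 1/s * lam powr (1-s) * B' powr s"
    using young_gen[OF s1 lam0 B] .
  have bern: "(n/m) powr \<beta> \<le> lam"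
  proof -
    have "n/m = 1 + 1/m" using m by (simp add: n_def field_simps)
    then have e: "(n/m) powr \<beta> = (1 + 1/m) powr \<beta>" by simp
    have "1/m > 0" using m by simp
    then have "-1 < 1/m" by linarith
    from bern_powr[OF b0 this] have "(1 + 1/m) powr \<beta> \<le> 1 + \<beta> * (1/m)" .
    then show ?thesis using e by (simp add: lam_def)
  qed
  have wl: "w * lam powr (1-s) \<le> m powr (r-1)"
  proof -
    have "(n/m) powr (r-1) = ((n/m) powr \<beta>) powr (s-1)"
      using s1 by (simp add: powr_powr \<beta>_def)
    also have "\<dots> \<le> lam powr (s-1)"
      using bern s1 n0 m by (intro powr_mono2) auto
    finally have "(n/m) powr (r-1) \<le> lam powr (s-1)" .
    then have "n powr (r-1) / m powr (r-1) \<le> lam powr (s-1)"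
      using n0 m by (simp add: powr_divide)
    then have "n powr (r-1) \<le> lam powr (s-1) * m powr (r-1)"
      using m by (simp add: divide_le_eq)
    then have "n powr (r-1) * lam powr (1-s) \<le> lam powr (s-1) * lam powr (1-s) * m powr (r-1)"
      using lam0 by (simp add: mult_right_mono)
    also have "lam powr (s-1) * lam powr (1-s) = 1"
      using lam0 by (simp add: powr_add[symmetric])
    finally show ?thesis by (simp add: w_def)
  qed
  have Bs: "B powr s = B * B powr (s-1)"
  proof (cases "B = 0")
    case True then show ?thesis using s1 by simp
  next
    case False then show ?thesis using B by (simp add: powr_mult_base)
  qed
  have mr: "m * m powr (r-1) = m powr r" using m by (simp add: powr_mult_base)
  have nr: "n * n powr (r-1) = n powr r" using n0 by (simp add: powr_mult_base)
  have w0: "w \<ge> 0" by (simp add: w_def)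
  have ml: "m * lam = m + \<beta>" using m by (simp add: lam_def field_simps)
  have sb: "(s-1)*(\<beta>-1) = r - s" using s1 by (simp add: \<beta>_def field_simps)
  have qr: "q*(r-s)/s = -1" using p s1 by (simp add: q_def r_def field_simps)
  have "1 - q*n + q*m*(s-1)/s*lam + q*n/s = 1 - q*n + q*(s-1)/s*(m*lam) + q*n/s"
    by (simp add: algebra_simps)
  also have "\<dots> = 1 + q*((s-1)*(\<beta>-1))/s" unfolding ml n_def using s1
    by (simp add: field_simps)
  also have "\<dots> = 0" unfolding sb using qr by simp
  finally have key: "1 - q*n + q*m*(s-1)/s*lam + q*n/s = 0" .
  define X where "X = B powr s"
  define P where "P = B powr (s-1)"
  define Z where "Z = B' powr s"
  define L where "L = lam powr (1-s)"
  have Bs': "X = B * P" using Bs by (simp add: X_def P_def)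
  have X0: "X \<ge> 0" "Z \<ge> 0" by (auto simp: X_def Z_def)
  have Y': "P * B' \<le> (s-1)/s * lam * X + 1/s * L * Z" using Y by (simp add: X_def P_def Z_def L_def)
  have wl': "w * L \<le> m powr (r-1)" using wl by (simp add: L_def)
  have "w * X - q * w * (n*B - m*B') * P = w * X * (1 - q*n) + q*w*m * (P * B')"
    using Bs' by (simp add: algebra_simps)
  also have "\<dots> \<le> w * X * (1 - q*n) + q*w*m * ((s-1)/s * lam * X + 1/s * L * Z)"
    using Y' q0 w0 m by (intro add_left_mono mult_left_mono) auto
  also have "\<dots> = w * X * (1 - q*n + q*m*(s-1)/s*lam) + (q/s) * m * (w * L) * Z"
    by (simp add: algebra_simps)
  also have "\<dots> \<le> w * X * (1 - q*n + q*m*(s-1)/s*lam) + (q/s) * m * (m powr (r-1)) * Z"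
    using wl' q0 s1 m X0 by (intro add_left_mono mult_right_mono mult_left_mono) auto
  also have "1 - q*n + q*m*(s-1)/s*lam = - q*n/s" using key by linarith
  finally have "w * X - q * w * (n*B - m*B') * P \<le> (q/s) * ((m * m powr (r-1)) * Z - (n * w) * X)"
    by (simp add: algebra_simps)
  then show ?thesis using mr nr by (simp add: w_def n_def X_def P_def Z_def)
qed



lemma hardy_partial:
  fixes a :: "nat \<Rightarrow> real" and p s :: real
  assumes p: "1 < p" "p \<le> s" and a: "\<And>k. a k \<ge> 0"
  shows "(\<Sum>n=1..N. real n powr (s/p-1) * ((\<Sum>k=1..n. a k)/real n) powr s)
     \<le> (p/(p-1)) powr s * (\<Sum>n=1..N. real n powr (s/p-1) * a n powr s)"
proof -
  define q where "q = p/(p-1)"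
  define r where "r = s/p"
  define b where "b n = (\<Sum>k=1..n. a k)/real n" for n
  define w where "w n = real n powr (r-1)" for n
  define F where "F n = real n powr r * b n powr s" for n
  have s1: "s > 1" using p by auto
  have q0: "q > 0" using p by (simp add: q_def)
  have r0: "r > 0" using p by (simp add: r_def)
  have b0: "b n \<ge> 0" for n unfolding b_def by (intro divide_nonneg_nonneg sum_nonneg a) auto
  have w0: "w n \<ge> 0" for n by (simp add: w_def)
  have F0: "F 0 = 0" using r0 by (simp add: F_def)
  have Fnn: "F n \<ge> 0" for n by (simp add: F_def)
  have an: "a n = real n * b n - real (n-1) * b (n-1)" if n1: "n \<ge> 1" for n
  proof -
    obtain m where m: "n = Suc m" using n1 by (cases n) auto
    have "real (Suc m) * b (Suc m) = (\<Sum>k=1..Suc m. a k)" by (simp add: b_def)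
    moreover have "real m * b m = (\<Sum>k=1..m. a k)" by (cases "m = 0") (auto simp: b_def)
    moreover have "(\<Sum>k=1..Suc m. a k) = (\<Sum>k=1..m. a k) + a (Suc m)" by simp
    ultimately show ?thesis using m by simp
  qed
  have step: "w n * b n powr s - q * w n * a n * b n powr (s-1) \<le> (q/s) * (F (n-1) - F n)"
    if "n \<ge> 1" for n
  proof (cases "n = 1")
    case True
    then have a1: "a 1 = b 1" using an[of 1] by simp
    have bs: "b 1 powr s = b 1 * b 1 powr (s-1)"
      using b0[of 1] s1 by (cases "b 1 = 0") (auto simp: powr_mult_base)
    have "w 1 * b 1 powr s - q * w 1 * a 1 * b 1 powr (s-1) = (1 - q) * b 1 powr s"
      using a1 bs by (simp add: w_def algebra_simps)
    also have "\<dots> \<le> (-q/s) * b 1 powr s"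
    proof (rule mult_right_mono)
      have h: "s + p * p \<le> p + p * s" using mult_nonneg_nonneg[of "s - p" "p - 1"] p by (simp add: algebra_simps)
      show "1 - q \<le> -q/s" using p s1 h by (simp add: q_def field_simps)
    qed simp
    also have "\<dots> = (q/s) * (F 0 - F 1)" by (simp add: F0 F_def)
    finally show ?thesis using True by simp
  next
    case False
    then have n2: "n \<ge> 2" using that by simp
    define m where "m = real (n-1)"
    have m0: "m > 0" using n2 by (simp add: m_def)
    have mn: "m + 1 = real n" using n2 by (simp add: m_def)
    have "(m+1) powr (r-1) * b n powr s - q * (m+1) powr (r-1) * ((m+1)*b n - m*b (n-1)) * b n powr (s-1)
       \<le> (q/s) * (m powr r * b (n-1) powr s - (m+1) powr r * b n powr s)"
      using hardy_step[OF p m0 b0 b0, of n "n-1"] by (simp add: q_def r_def)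
    then show ?thesis using an[OF that] mn
      by (simp add: w_def F_def m_def)
  qed
  have ind: "(\<Sum>n=1..N. w n * b n powr s - q * w n * a n * b n powr (s-1)) \<le> -(q/s) * F N" for N
  proof (induction N)
    case 0 then show ?case by (simp add: F0)
  next
    case (Suc N)
    have "(\<Sum>n=1..Suc N. w n * b n powr s - q * w n * a n * b n powr (s-1))
        = (\<Sum>n=1..N. w n * b n powr s - q * w n * a n * b n powr (s-1))
          + (w (Suc N) * b (Suc N) powr s - q * w (Suc N) * a (Suc N) * b (Suc N) powr (s-1))"
      by simp
    also have "\<dots> \<le> -(q/s) * F N + (q/s) * (F N - F (Suc N))"
      using Suc.IH step[of "Suc N"] by simp
    finally show ?case by (simp add: algebra_simps)
  qed
  have yo: "q * w n * a n * b n powr (s-1) \<le> w n * ((s-1)/s * b n powr s + q powr s / s * a n powr s)" for n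
  proof -
    have lq: "1/q > 0" using q0 by simp
    have "b n powr (s-1) * a n \<le> (s-1)/s * (1/q) * b n powr s + 1/s * (1/q) powr (1-s) * a n powr s"
      using young_gen[OF s1 lq b0 a] .
    then have "q * (b n powr (s-1) * a n) \<le> q * ((s-1)/s * (1/q) * b n powr s + 1/s * (1/q) powr (1-s) * a n powr s)"
      using q0 by (simp add: mult_left_mono)
    also have "q * ((s-1)/s * (1/q) * b n powr s + 1/s * (1/q) powr (1-s) * a n powr s)
       = (s-1)/s * b n powr s + q powr s / s * a n powr s"
    proof -
      have e1: "(1/q) powr (1-s) = q powr (s-1)" using q0 by (simp add: powr_divide powr_minus_divide[symmetric] powr_minus)
      have e2: "q * q powr (s-1) = q powr s" using q0 by (simp add: powr_mult_base)
      have "q * ((s-1)/s * (1/q) * b n powr s + 1/s * (1/q) powr (1-s) * a n powr s)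
         = (s-1)/s * b n powr s + (q * q powr (s-1))/s * a n powr s"
        using q0 s1 unfolding e1 by (simp add: field_simps)
      then show ?thesis unfolding e2 .
    qed
    finally have "q * (b n powr (s-1) * a n) \<le> (s-1)/s * b n powr s + q powr s / s * a n powr s" .
    from mult_left_mono[OF this w0[of n]] show ?thesis by (simp add: algebra_simps)
  qed
  define S where "S = (\<Sum>n=1..N. w n * b n powr s)"
  define R where "R = (\<Sum>n=1..N. w n * a n powr s)"
  have e: "(\<Sum>n=1..N. w n * b n powr s - q * w n * a n * b n powr (s-1)) = S - (\<Sum>n=1..N. q * w n * a n * b n powr (s-1))"
    unfolding S_def by (rule sum_subtractf)
  have "(q/s) * F N \<ge> 0" using q0 s1 Fnn[of N] by simp
  then have "S - (\<Sum>n=1..N. q * w n * a n * b n powr (s-1)) \<le> 0"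
    using ind[of N] unfolding e by linarith
  moreover have "(\<Sum>n=1..N. q * w n * a n * b n powr (s-1)) \<le> (\<Sum>n=1..N. w n * ((s-1)/s * b n powr s + q powr s / s * a n powr s))"
    by (rule sum_mono) (rule yo)
  moreover have "(\<Sum>n=1..N. w n * ((s-1)/s * b n powr s + q powr s / s * a n powr s)) = (s-1)/s * S + q powr s / s * R"
    unfolding S_def R_def sum_distrib_left sum.distrib[symmetric] by (rule sum.cong) (auto simp: algebra_simps)
  ultimately have "S \<le> (s-1)/s * S + q powr s / s * R" by linarith
  then have "S/s \<le> q powr s / s * R" using s1 by (simp add: field_simps)
  then have "S \<le> q powr s * R" using s1 by (simp add: field_simps)
  then show ?thesis unfolding S_def R_def w_def b_def q_def r_def .
qed



lemma shift1: "(\<Sum>k=1..n. g k) = (\<Sum>k<n. g (Suc k))"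
  using sum.atLeast1_atMost_eq[of g n] by simp

lemma hardy_inf:
  fixes a :: "nat \<Rightarrow> real" and p s :: real
  assumes p: "1 < p" "p \<le> s" and a: "\<And>k. a k \<ge> 0"
    and sm: "summable (\<lambda>n. real (Suc n) powr (s/p-1) * a (Suc n) powr s)"
  shows "summable (\<lambda>n. real (Suc n) powr (s/p-1) * ((\<Sum>k=1..Suc n. a k)/real (Suc n)) powr s)"
    and "(\<Sum>n. real (Suc n) powr (s/p-1) * ((\<Sum>k=1..Suc n. a k)/real (Suc n)) powr s)
        \<le> (p/(p-1)) powr s * (\<Sum>n. real (Suc n) powr (s/p-1) * a (Suc n) powr s)"
proof -
  define f where "f n = real n powr (s/p-1) * ((\<Sum>k=1..n. a k)/real n) powr s" for n
  define g where "g n = real n powr (s/p-1) * a n powr s" for n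
  have part: "(\<Sum>n<N. f (Suc n)) \<le> (p/(p-1)) powr s * (\<Sum>n. g (Suc n))" for N
  proof -
    have "(\<Sum>n<N. f (Suc n)) = (\<Sum>n=1..N. f n)" by (rule shift1[symmetric])
    also have "\<dots> \<le> (p/(p-1)) powr s * (\<Sum>n=1..N. g n)"
      unfolding f_def g_def by (rule hardy_partial[OF p a])
    also have "(\<Sum>n=1..N. g n) = (\<Sum>n<N. g (Suc n))" by (rule shift1)
    also have "\<dots> \<le> (\<Sum>n. g (Suc n))"
      using sm by (intro sum_le_suminf) (auto simp: g_def a)
    finally show ?thesis using p by (simp add: mult_left_mono)
  qed
  have fnn: "f (Suc n) \<ge> 0" for n by (simp add: f_def)
  have "summable (\<lambda>n. f (Suc n))"
    by (rule summableI_nonneg_bounded[OF fnn part])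
  then show "summable (\<lambda>n. real (Suc n) powr (s/p-1) * ((\<Sum>k=1..Suc n. a k)/real (Suc n)) powr s)"
    by (simp add: f_def)
  from suminf_le_const[OF this] part show "(\<Sum>n. real (Suc n) powr (s/p-1) * ((\<Sum>k=1..Suc n. a k)/real (Suc n)) powr s)
        \<le> (p/(p-1)) powr s * (\<Sum>n. real (Suc n) powr (s/p-1) * a (Suc n) powr s)"
    by (simp add: f_def g_def)
qed



lemma conv_step:
  fixes s m a S :: real
  assumes s: "s \<ge> 1" and m: "m > 0" and a: "a > 0" and S: "S \<ge> m*a"
  shows "((m+1)*a) powr s - (m*a) powr s \<le> (S + a) powr s - S powr s"
proof -
  define f where "f x = x powr s" for x :: real
  define x1 where "x1 = m*a"
  define x4 where "x4 = S + a"
  have x1p: "x1 > 0" using m a by (simp add: x1_def)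
  have sub: "{x1..x4} \<subseteq> {0<..}" using x1p by auto
  have cv: "convex_on {x1..x4} f"
    unfolding f_def by (rule convex_on_subset[OF powr_convex[OF s] sub]) (simp add: convex_real_interval)
  define d where "d = x4 - x1"
  have d0: "d > 0" using S a by (simp add: d_def x4_def x1_def)
  have c2: "(m+1)*a \<in> {x1..x4}" using S a by (auto simp: x1_def x4_def algebra_simps)
  have c3: "S \<in> {x1..x4}" using S a by (auto simp: x1_def x4_def)
  have h2: "f ((m+1)*a) \<le> (f x4 - f x1) / d * ((m+1)*a - x1) + f x1"
    using convex_onD_Icc'[OF cv c2] by (simp add: d_def)
  have h3: "f S \<le> (f x4 - f x1) / d * (S - x1) + f x1"
    using convex_onD_Icc'[OF cv c3] by (simp add: d_def)
  have "(f x4 - f x1) / d * ((m+1)*a - x1) + (f x4 - f x1) / d * (S - x1)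
      = (f x4 - f x1) / d * (((m+1)*a - x1) + (S - x1))" by (rule distrib_left[symmetric])
  also have "((m+1)*a - x1) + (S - x1) = d" by (simp add: d_def x1_def x4_def algebra_simps)
  also have "(f x4 - f x1) / d * d = f x4 - f x1" using d0 by simp
  finally have "f ((m+1)*a) + f S \<le> f x4 + f x1" using h2 h3 by linarith
  then show ?thesis by (simp add: f_def x1_def x4_def)
qed

lemma pow_sum_lower:
  fixes a :: "nat \<Rightarrow> real" and s :: real
  assumes s: "s \<ge> 1" and a: "\<And>k. a k \<ge> 0" and anti: "\<And>i j. 1 \<le> i \<Longrightarrow> i \<le> j \<Longrightarrow> a j \<le> a i"
  shows "(\<Sum>k=1..n. (real k powr s - real (k-1) powr s) * a k powr s) \<le> (\<Sum>k=1..n. a k) powr s"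
proof (induction n)
  case 0 then show ?case using s by simp
next
  case (Suc n)
  define A where "A = (\<Sum>k=1..n. a k)"
  define b where "b = a (Suc n)"
  have A0: "A \<ge> 0" unfolding A_def by (intro sum_nonneg a)
  have b0: "b \<ge> 0" by (simp add: b_def a)
  have key: "(real (Suc n) powr s - real n powr s) * b powr s \<le> (A + b) powr s - A powr s"
  proof (cases "n = 0 \<or> b = 0")
    case True
    then show ?thesis
    proof
      assume "n = 0" then show ?thesis using s by (simp add: A_def)
    next
      assume "b = 0" then show ?thesis using s by simp
    qed
  next
    case False
    then have n0: "real n > 0" and bp: "b > 0" using b0 by auto
    have "A \<ge> real n * b"
    proof -
      have "of_nat (card {1..n}) * b \<le> A"
        unfolding A_def b_def by (rule sum_bounded_below) (auto intro: anti)
      then show ?thesis by simp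
    qed
    from conv_step[OF s n0 bp this]
    have "((real n + 1) * b) powr s - (real n * b) powr s \<le> (A + b) powr s - A powr s" by simp
    moreover have "((real n + 1) * b) powr s - (real n * b) powr s = (real (Suc n) powr s - real n powr s) * b powr s"
    proof -
      have "((real n + 1) * b) powr s = (real n + 1) powr s * b powr s" by (rule powr_mult; use b0 in simp)
      moreover have "(real n * b) powr s = real n powr s * b powr s" by (rule powr_mult; use b0 in simp)
      ultimately show ?thesis by (simp add: algebra_simps)
    qed
    ultimately show ?thesis by simp
  qed
  have "(\<Sum>k=1..Suc n. (real k powr s - real (k-1) powr s) * a k powr s)
      = (\<Sum>k=1..n. (real k powr s - real (k-1) powr s) * a k powr s) + (real (Suc n) powr s - real n powr s) * b powr s"
    by (simp add: b_def)
  also have "\<dots> \<le> A powr s + ((A + b) powr s - A powr s)"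
    using Suc.IH key unfolding A_def by linarith
  also have "\<dots> = (\<Sum>k=1..Suc n. a k) powr s" by (simp add: A_def b_def)
  finally show ?case .
qed

lemma tele_pow:
  fixes s :: real assumes "s > 0"
  shows "(\<Sum>k=1..m. real k powr s - real (k-1) powr s) = real m powr s"
  by (induction m) (use assms in auto)

lemma abel_min:
  fixes u c :: "nat \<Rightarrow> real"
  assumes c: "\<And>k. k > N \<Longrightarrow> c k = 0"
  shows "(\<Sum>k=1..n. u k * c k) = (\<Sum>j=1..N. (c j - c (Suc j)) * (\<Sum>k=1..min n j. u k))"
proof (induction n)
  case 0 then show ?case by simp
next
  case (Suc n)
  have tel: "(\<Sum>j=1..N. if Suc n \<le> j then c j - c (Suc j) else 0) = c (Suc n)"
  proof -
    have "(\<Sum>j=1..N. if Suc n \<le> j then c j - c (Suc j) else 0) = (\<Sum>j\<in>{j\<in>{1..N}. Suc n \<le> j}. c j - c (Suc j))"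
      by (rule sum.inter_filter[symmetric]) simp
    also have "{j\<in>{1..N}. Suc n \<le> j} = {Suc n..N}" by auto
    also have "(\<Sum>j=Suc n..N. c j - c (Suc j)) = c (Suc n)"
    proof (cases "n \<le> N")
      case True
      have "(\<Sum>j=Suc n..N. c j - c (Suc j)) = - (\<Sum>j=Suc n..N. c (Suc j) - c j)"
        by (simp add: sum_negf[symmetric])
      also have "\<dots> = c (Suc n) - c (Suc N)" using True by (subst sum_Suc_diff) auto
      finally show ?thesis using c[of "Suc N"] by simp
    next
      case False then show ?thesis using c[of "Suc n"] by simp
    qed
    finally show ?thesis .
  qed
  have each: "(c j - c (Suc j)) * (\<Sum>k=1..min (Suc n) j. u k)
      = (c j - c (Suc j)) * (\<Sum>k=1..min n j. u k) + u (Suc n) * (if Suc n \<le> j then c j - c (Suc j) else 0)" for j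
  proof (cases "Suc n \<le> j")
    case True
    then have "min (Suc n) j = Suc n" "min n j = n" by auto
    then show ?thesis using True by (simp add: algebra_simps)
  next
    case False
    then have "min (Suc n) j = min n j" by auto
    then show ?thesis using False by simp
  qed
  have "(\<Sum>j=1..N. (c j - c (Suc j)) * (\<Sum>k=1..min (Suc n) j. u k))
     = (\<Sum>j=1..N. (c j - c (Suc j)) * (\<Sum>k=1..min n j. u k)) + u (Suc n) * (\<Sum>j=1..N. if Suc n \<le> j then c j - c (Suc j) else 0)"
    by (subst sum.cong[OF refl each]) (simp only: sum.distrib sum_distrib_left)
  also have "\<dots> = (\<Sum>k=1..n. u k * c k) + u (Suc n) * c (Suc n)" using Suc.IH tel by simp
  finally show ?case by simp
qed



lemma summable_zeta_terms:
  fixes al :: real assumes "al > 1"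
  shows "summable (\<lambda>n. real (n + k) powr (-al))"
proof -
  have "summable (\<lambda>n. real n powr (-al))" using assms by (simp add: summable_real_powr_iff)
  then show ?thesis by (rule summable_ignore_initial_segment)
qed

lemma zeta_eq:
  fixes al :: real assumes "al > 1"
  shows "zeta_real al = (\<Sum>n. real (Suc n) powr (-al))"
    and "zeta_real al - 1 = (\<Sum>n. real (n+2) powr (-al))"
proof -
  have e: "(\<lambda>n. 1 / real (Suc n) powr al) = (\<lambda>n. real (Suc n) powr (-al))"
    by (simp add: powr_minus_divide)
  show z: "zeta_real al = (\<Sum>n. real (Suc n) powr (-al))" unfolding zeta_real_def e ..
  have sm: "summable (\<lambda>n. real (Suc n) powr (-al))"
    using summable_zeta_terms[OF assms, of 1] by simp
  have "(\<Sum>n. real (Suc (Suc n)) powr (-al)) = (\<Sum>n. real (Suc n) powr (-al)) - real (Suc 0) powr (-al)"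
    by (rule suminf_split_head[OF sm])
  then show "zeta_real al - 1 = (\<Sum>n. real (n+2) powr (-al))" using z
    by (simp add: add.commute)
qed

lemma chi_lower:
  fixes p s al :: real and j :: nat
  assumes p: "1 < p" "p \<le> s" and al: "al = s - s/p + 1" and j: "j \<ge> 1"
  shows "summable (\<lambda>n. real (Suc n) powr (-al) * real (min (Suc n) j) powr s)"
    and "zeta_real al * (\<Sum>k=1..j. real k powr (s/p-1))
         \<le> (\<Sum>n. real (Suc n) powr (-al) * real (min (Suc n) j) powr s)"
proof -
  define r where "r = s/p"
  have s0: "s > 1" using p by auto
  have r1: "r \<ge> 1" using p by (simp add: r_def)
  have rs: "r < s" using p s0 by (simp add: r_def field_simps)
  have al1: "al > 1" using rs al by (simp add: r_def)
  define G where "G n = real (Suc n) powr (-al) * real (min (Suc n) j) powr s" for n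
  have smz: "summable (\<lambda>n. real (n + 1) powr (-al))" by (rule summable_zeta_terms[OF al1])
  have smG: "summable G"
  proof (rule summable_comparison_test')
    show "summable (\<lambda>n. real j powr s * real (n + 1) powr (-al))"
      by (rule summable_mult[OF smz])
    show "norm (G n) \<le> real j powr s * real (n + 1) powr (-al)" for n
    proof -
      have "real (min (Suc n) j) powr s \<le> real j powr s" using s0 by (intro powr_mono2) auto
      then show ?thesis by (simp add: G_def mult_right_mono)
    qed
  qed
  show "summable (\<lambda>n. real (Suc n) powr (-al) * real (min (Suc n) j) powr s)" using smG unfolding G_def .
  define W where "W = (\<Sum>k=1..j. real k powr (r-1))"
  define h where "h n = real (n + (j + 1)) powr (-al)" for n
  have smh: "summable h" unfolding h_def by (rule summable_zeta_terms[OF al1])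
  have hnn: "h n \<ge> 0" for n by (simp add: h_def)
  have split: "suminf G = (\<Sum>n. G (n + j)) + (\<Sum>n<j. G n)"
    by (rule suminf_split_initial_segment[OF smG])
  have head: "(\<Sum>n<j. G n) = W"
  proof -
    have "(\<Sum>n<j. G n) = (\<Sum>n<j. real (Suc n) powr (r-1))"
    proof (rule sum.cong[OF refl])
      fix n assume "n \<in> {..<j}"
      then have "min (Suc n) j = Suc n" by auto
      then have "G n = real (Suc n) powr (-al) * real (Suc n) powr s" by (simp add: G_def)
      also have "\<dots> = real (Suc n) powr (-al + s)" by (rule powr_add[symmetric])
      also have "-al + s = r - 1" using al by (simp add: r_def)
      finally show "G n = real (Suc n) powr (r-1)" .
    qed
    also have "\<dots> = W" unfolding W_def by (rule shift1[symmetric])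
    finally show ?thesis .
  qed
  have tail: "(\<lambda>n. G (n + j)) = (\<lambda>n. real j powr s * h n)"
  proof
    fix n
    have "min (Suc (n + j)) j = j" by auto
    then show "G (n + j) = real j powr s * h n" by (simp add: G_def h_def algebra_simps)
  qed
  have jp: "real j > 0" using j by simp
  have hlow: "real j powr (1 - al) * (zeta_real al - 1) \<le> suminf h"
  proof -
    define grp where "grp m = (\<Sum>i\<in>{m*j..<m*j+j}. h i)" for m
    have gs: "grp sums suminf h" unfolding grp_def
      using sums_group[OF summable_sums[OF smh]] j by simp
    have glow: "real j powr (1 - al) * real (m + 2) powr (-al) \<le> grp m" for m
    proof -
      have "of_nat (card {m*j..<m*j+j}) * real ((m+2)*j) powr (-al) \<le> grp m"
        unfolding grp_def
      proof (rule sum_bounded_below)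
        fix i assume i: "i \<in> {m*j..<m*j+j}"
        then have "i + (j + 1) \<le> (m+2)*j" by (auto simp: algebra_simps)
        then have "real (i + (j+1)) \<le> real ((m+2)*j)" by linarith
        then show "real ((m+2)*j) powr (-al) \<le> h i"
          unfolding h_def using al1 by (intro powr_mono2') auto
      qed
      moreover have "of_nat (card {m*j..<m*j+j}) * real ((m+2)*j) powr (-al)
          = real j powr (1 - al) * real (m + 2) powr (-al)"
      proof -
        have "real ((m+2)*j) powr (-al) = (real (m+2) * real j) powr (-al)" by (simp only: of_nat_mult)
        also have "\<dots> = real (m+2) powr (-al) * real j powr (-al)" by (rule powr_mult; simp)
        finally have "real ((m+2)*j) powr (-al) = real (m+2) powr (-al) * real j powr (-al)" .
        moreover have "real j * real j powr (-al) = real j powr (1 - al)"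
          using jp by (simp add: powr_mult_base)
        ultimately show ?thesis by (simp add: algebra_simps)
      qed
      ultimately show ?thesis by simp
    qed
    have sm2: "summable (\<lambda>m. real (m + 2) powr (-al))" by (rule summable_zeta_terms[OF al1])
    have "real j powr (1 - al) * (zeta_real al - 1) = (\<Sum>m. real j powr (1 - al) * real (m + 2) powr (-al))"
      using zeta_eq(2)[OF al1] suminf_mult[OF sm2] by simp
    also have "\<dots> \<le> suminf grp"
      using glow summable_mult[OF sm2] sums_summable[OF gs] by (intro suminf_le) auto
    also have "suminf grp = suminf h" using gs sums_unique by metis
    finally show ?thesis .
  qed
  have z1: "zeta_real al - 1 \<ge> 0"
    unfolding zeta_eq(2)[OF al1] by (rule suminf_nonneg[OF summable_zeta_terms[OF al1]]) simp
  have Wle: "W \<le> real j powr r"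
  proof -
    have "W \<le> of_nat (card {1..j}) * real j powr (r-1)"
      unfolding W_def by (rule sum_bounded_above) (use r1 in \<open>auto intro: powr_mono2\<close>)
    also have "\<dots> = real j powr r" using jp by (simp add: powr_mult_base)
    finally show ?thesis .
  qed
  have "(\<Sum>n. G (n + j)) = real j powr s * suminf h"
    unfolding tail by (rule suminf_mult[OF smh])
  also have "\<dots> \<ge> real j powr s * (real j powr (1 - al) * (zeta_real al - 1))"
    using hlow by (simp add: mult_left_mono)
  finally have t1: "real j powr s * (real j powr (1 - al) * (zeta_real al - 1)) \<le> (\<Sum>n. G (n + j))" .
  have jj: "real j powr s * real j powr (1 - al) = real j powr r"
    using jp al by (simp add: powr_add[symmetric] r_def)
  have t2: "real j powr r * (zeta_real al - 1) \<le> (\<Sum>n. G (n + j))" using t1 jj by (metis mult.assoc)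
  have "(zeta_real al - 1) * W \<le> (zeta_real al - 1) * real j powr r"
    using Wle z1 by (rule mult_left_mono)
  then have "zeta_real al * W \<le> suminf G" using split head t2 by (simp add: algebra_simps)
  then show "zeta_real al * (\<Sum>k=1..j. real k powr (s/p-1))
         \<le> (\<Sum>n. real (Suc n) powr (-al) * real (min (Suc n) j) powr s)"
    unfolding W_def G_def r_def .
qed



lemma lower_inf:
  fixes a :: "nat \<Rightarrow> real" and p s :: real
  assumes p: "1 < p" "p \<le> s" and a: "\<And>k. a k \<ge> 0"
    and anti: "\<And>i j. 1 \<le> i \<Longrightarrow> i \<le> j \<Longrightarrow> a j \<le> a i"
    and smM: "summable (\<lambda>n. real (Suc n) powr (s/p-1) * ((\<Sum>k=1..Suc n. a k)/real (Suc n)) powr s)"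
    and smR: "summable (\<lambda>n. real (Suc n) powr (s/p-1) * a (Suc n) powr s)"
  shows "zeta_real (s - s/p + 1) * (\<Sum>n. real (Suc n) powr (s/p-1) * a (Suc n) powr s)
     \<le> (\<Sum>n. real (Suc n) powr (s/p-1) * ((\<Sum>k=1..Suc n. a k)/real (Suc n)) powr s)"
proof -
  define al where "al = s - s/p + 1"
  define r where "r = s/p"
  define Mt where "Mt n = real (Suc n) powr (s/p-1) * ((\<Sum>k=1..Suc n. a k)/real (Suc n)) powr s" for n
  define Rt where "Rt n = real (Suc n) powr (s/p-1) * a (Suc n) powr s" for n
  have s1: "s > 1" using p by auto
  have al1: "al = s - s/p + 1" by (simp add: al_def)
  have part: "zeta_real al * (\<Sum>n<N. Rt n) \<le> suminf Mt" for N
  proof -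
    define a' where "a' k = (if k \<le> N then a k else 0)" for k
    define c where "c k = a' k powr s" for k
    define d where "d j = c j - c (Suc j)" for j
    define g where "g j n = real (Suc n) powr (-al) * real (min (Suc n) j) powr s" for j n
    have a'0: "a' k \<ge> 0" for k by (simp add: a'_def a)
    have a'anti: "a' j \<le> a' i" if "1 \<le> i" "i \<le> j" for i j
      using anti[OF that] that a by (auto simp: a'_def)
    have cN: "c k = 0" if "k > N" for k using that s1 by (simp add: c_def a'_def)
    have d0: "d j \<ge> 0" if "j \<ge> 1" for j
    proof -
      have "a' (Suc j) \<le> a' j" using a'anti[of j "Suc j"] that by simp
      then show ?thesis unfolding d_def c_def using a'0 s1 by (simp add: powr_mono2)
    qed
    have gs: "summable (g j)" if "j \<ge> 1" for j
      unfolding g_def using chi_lower(1)[OF p al1 that] .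
    have gl: "zeta_real al * (\<Sum>k=1..j. real k powr (s/p-1)) \<le> suminf (g j)" if "j \<ge> 1" for j
      unfolding g_def using chi_lower(2)[OF p al1 that] .
    have Mlow: "(\<Sum>j=1..N. d j * g j n) \<le> Mt n" for n
    proof -
      define A where "A = (\<Sum>k=1..Suc n. a k)"
      define A' where "A' = (\<Sum>k=1..Suc n. a' k)"
      have A'0: "A' \<ge> 0" unfolding A'_def by (intro sum_nonneg a'0)
      have AA: "A' \<le> A" unfolding A_def A'_def by (intro sum_mono) (auto simp: a'_def a)
      have np: "real (Suc n) > 0" by simp
      have "(\<Sum>k=1..Suc n. (real k powr s - real (k-1) powr s) * c k) \<le> A' powr s"
        unfolding c_def A'_def using pow_sum_lower[of s a' "Suc n"] s1 a'0 a'anti by simp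
      also have "(\<Sum>k=1..Suc n. (real k powr s - real (k-1) powr s) * c k)
          = (\<Sum>j=1..N. d j * (\<Sum>k=1..min (Suc n) j. real k powr s - real (k-1) powr s))"
        unfolding d_def by (rule abel_min) (rule cN)
      also have "\<dots> = (\<Sum>j=1..N. d j * real (min (Suc n) j) powr s)"
        by (rule sum.cong[OF refl]) (use tele_pow[of s] s1 in simp)
      finally have h1: "(\<Sum>j=1..N. d j * real (min (Suc n) j) powr s) \<le> A' powr s" .
      have "(\<Sum>j=1..N. d j * g j n) = real (Suc n) powr (-al) * (\<Sum>j=1..N. d j * real (min (Suc n) j) powr s)"
        by (simp add: g_def sum_distrib_left algebra_simps)
      also have "\<dots> \<le> real (Suc n) powr (-al) * A' powr s"
        using h1 by (simp add: mult_left_mono)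
      also have "\<dots> \<le> real (Suc n) powr (-al) * A powr s"
        using AA A'0 s1 by (intro mult_left_mono powr_mono2) auto
      also have "real (Suc n) powr (-al) * A powr s = Mt n"
      proof -
        have "(A / real (Suc n)) powr s = A powr s / real (Suc n) powr s"
          using A'0 AA powr_divide[of A "real (Suc n)" s] by linarith
        moreover have "real (Suc n) powr (-al) = real (Suc n) powr (s/p-1) / real (Suc n) powr s"
          using np by (simp add: al_def powr_diff[symmetric] algebra_simps)
        ultimately show ?thesis by (simp add: Mt_def A_def)
      qed
      finally show ?thesis .
    qed
    have smsum: "summable (\<lambda>n. \<Sum>j=1..N. d j * g j n)"
      by (intro summable_sum summable_mult gs) auto
    have "zeta_real al * (\<Sum>n<N. Rt n) = zeta_real al * (\<Sum>k=1..N. real k powr (s/p-1) * c k)"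
    proof -
      have "(\<Sum>n<N. Rt n) = (\<Sum>k=1..N. real k powr (s/p-1) * a k powr s)"
        unfolding Rt_def by (rule shift1[symmetric])
      also have "\<dots> = (\<Sum>k=1..N. real k powr (s/p-1) * c k)"
        by (rule sum.cong) (auto simp: c_def a'_def)
      finally show ?thesis by simp
    qed
    also have "(\<Sum>k=1..N. real k powr (s/p-1) * c k) = (\<Sum>j=1..N. d j * (\<Sum>k=1..min N j. real k powr (s/p-1)))"
      unfolding d_def by (rule abel_min) (rule cN)
    also have "\<dots> = (\<Sum>j=1..N. d j * (\<Sum>k=1..j. real k powr (s/p-1)))"
      by (rule sum.cong) auto
    also have "zeta_real al * \<dots> = (\<Sum>j=1..N. d j * (zeta_real al * (\<Sum>k=1..j. real k powr (s/p-1))))"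
      by (simp add: sum_distrib_left algebra_simps)
    also have "\<dots> \<le> (\<Sum>j=1..N. d j * suminf (g j))"
      by (intro sum_mono mult_left_mono gl d0) auto
    also have "\<dots> = (\<Sum>j=1..N. suminf (\<lambda>n. d j * g j n))"
      by (intro sum.cong refl suminf_mult[symmetric] gs) auto
    also have "\<dots> = (\<Sum>n. \<Sum>j=1..N. d j * g j n)"
      by (rule suminf_sum[symmetric]) (intro summable_mult gs, auto)
    also have "\<dots> \<le> suminf Mt"
      using Mlow smsum smM unfolding Mt_def[symmetric] by (intro suminf_le) auto
    finally show ?thesis .
  qed
  have "(\<lambda>N. zeta_real al * (\<Sum>n<N. Rt n)) \<longlonglongrightarrow> zeta_real al * suminf Rt"
    by (intro tendsto_mult tendsto_const summable_LIMSEQ) (use smR in \<open>unfold Rt_def\<close>)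
  then have "zeta_real al * suminf Rt \<le> suminf Mt"
    using part by (intro LIMSEQ_le_const2) auto
  then show ?thesis unfolding al_def Rt_def Mt_def .
qed



lemma rearr_basic:
  assumes lim: "(\<lambda>n. norm (x n)) \<longlonglongrightarrow> 0"
  shows "\<And>n. n \<ge> 1 \<Longrightarrow> rearr x n \<ge> 0"
    and "\<And>i j. 1 \<le> i \<Longrightarrow> i \<le> j \<Longrightarrow> rearr x j \<le> rearr x i"
proof -
  define Sn where "Sn n = {t. 0 \<le> t \<and> finite (dist_count x t) \<and> card (dist_count x t) < n}" for n
  have "Bseq (\<lambda>n. norm (x n))" using lim by (intro convergent_imp_Bseq convergentI)
  then obtain K where K: "K > 0" "\<And>n. norm (norm (x n)) \<le> K" by (auto elim: BseqE)
  have Kin: "K \<in> Sn n" if "n \<ge> 1" for n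
  proof -
    have Kb: "norm (x k) \<le> K" for k using K(2)[of k] by simp
    have "dist_count x K = {}" unfolding dist_count_def using Kb by (auto simp: not_less)
    then show ?thesis using K that by (simp add: Sn_def)
  qed
  have bdd: "bdd_below (Sn n)" for n by (rule bdd_belowI[of _ 0]) (simp add: Sn_def)
  show "rearr x n \<ge> 0" if "n \<ge> 1" for n
    unfolding rearr_def Sn_def[symmetric]
    by (rule cInf_greatest) (use Kin[OF that] in \<open>auto simp: Sn_def\<close>)
  show "rearr x j \<le> rearr x i" if "1 \<le> i" "i \<le> j" for i j
  proof -
    have "Sn i \<subseteq> Sn j" using that by (auto simp: Sn_def)
    then have "Inf (Sn j) \<le> Inf (Sn i)" using Kin[OF that(1)] bdd by (intro cInf_superset_mono) auto
    then show ?thesis unfolding rearr_def Sn_def .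
  qed
qed

lemma rearr_sorted:
  assumes anti: "\<And>i j. 1 \<le> i \<Longrightarrow> i \<le> j \<Longrightarrow> norm (x j) \<le> norm (x i)" and n: "n \<ge> 1"
  shows "rearr x n = norm (x n)"
proof -
  have "{t. 0 \<le> t \<and> finite (dist_count x t) \<and> card (dist_count x t) < n} = {norm (x n)..}"
  proof (intro set_eqI iffI)
    fix t assume t: "t \<in> {t. 0 \<le> t \<and> finite (dist_count x t) \<and> card (dist_count x t) < n}"
    show "t \<in> {norm (x n)..}"
    proof (rule ccontr)
      assume "t \<notin> {norm (x n)..}"
      then have tl: "t < norm (x n)" by simp
      have "{1..n} \<subseteq> dist_count x t"
        using anti tl by (force simp: dist_count_def)
      then have "card {1..n} \<le> card (dist_count x t)" using t by (intro card_mono) auto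
      then show False using t by simp
    qed
  next
    fix t assume t: "t \<in> {norm (x n)..}"
    from t have "norm (x n) \<le> t" by simp
    then have t0: "t \<ge> 0" by (rule order_trans[OF norm_ge_zero])
    have sub: "dist_count x t \<subseteq> {1..<n}"
    proof
      fix k assume k: "k \<in> dist_count x t"
      then have k1: "k \<ge> 1" and tk: "t < norm (x k)" by (auto simp: dist_count_def)
      have "k < n"
      proof (rule ccontr)
        assume "\<not> k < n"
        then have "norm (x k) \<le> norm (x n)" using anti n by simp
        then show False using t tk by simp
      qed
      then show "k \<in> {1..<n}" using k1 by simp
    qed
    then have "finite (dist_count x t)" by (rule finite_subset) simp
    moreover have "card (dist_count x t) \<le> card {1..<n}" using sub by (intro card_mono) auto
    ultimately show "t \<in> {t. 0 \<le> t \<and> finite (dist_count x t) \<and> card (dist_count x t) < n}"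
      using t0 n by auto
  qed
  then show ?thesis unfolding rearr_def by simp
qed



lemma zeta_nonneg: assumes "al > 1" shows "zeta_real al \<ge> 0"
  unfolding zeta_eq(1)[OF assms]
  by (rule suminf_nonneg) (use summable_zeta_terms[OF assms, of 1] in auto)

lemma zeta_arg: assumes "1 < p" shows "s / conj_exp p + 1 = s - s/p + 1"
  using assms by (simp add: conj_exp_def field_simps)

lemma part1:
  fixes p s :: real
  assumes p: "1 < p" "p \<le> s" and x: "in_lorentz p s x"
  shows "zeta_real (s / conj_exp p + 1) powr (1 / s) * lorentz_norm p s x \<le> max_lorentz_norm p s x
          \<and> max_lorentz_norm p s x \<le> conj_exp p * lorentz_norm p s x"
proof -
  have lim: "(\<lambda>n. norm (x n)) \<longlonglongrightarrow> 0" and smL: "summable (lorentz_terms p s x)"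
    using x by (auto simp: in_lorentz_def)
  define a where "a k = (if k = 0 then 0 else rearr x k)" for k
  have a0: "a k \<ge> 0" for k using rearr_basic(1)[OF lim, of k] by (simp add: a_def)
  have aanti: "a j \<le> a i" if "1 \<le> i" "i \<le> j" for i j
    using rearr_basic(2)[OF lim that] that by (simp add: a_def)
  have Req: "lorentz_terms p s x = (\<lambda>n. real (Suc n) powr (s/p-1) * a (Suc n) powr s)"
    by (rule ext) (simp add: lorentz_terms_def a_def)
  have Meq: "max_lorentz_terms p s x = (\<lambda>n. real (Suc n) powr (s/p-1) * ((\<Sum>k=1..Suc n. a k)/real (Suc n)) powr s)"
  proof (rule ext)
    fix n
    have "(\<Sum>k=1..Suc n. a k) = (\<Sum>k=1..Suc n. rearr x k)" by (rule sum.cong) (auto simp: a_def)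
    then show "max_lorentz_terms p s x n = real (Suc n) powr (s/p-1) * ((\<Sum>k=1..Suc n. a k)/real (Suc n)) powr s"
      by (simp add: max_lorentz_terms_def)
  qed
  have smR: "summable (\<lambda>n. real (Suc n) powr (s/p-1) * a (Suc n) powr s)" using smL Req by simp
  note H = hardy_inf[OF p a0 smR]
  have low: "zeta_real (s - s/p + 1) * (\<Sum>n. real (Suc n) powr (s/p-1) * a (Suc n) powr s)
     \<le> (\<Sum>n. real (Suc n) powr (s/p-1) * ((\<Sum>k=1..Suc n. a k)/real (Suc n)) powr s)"
    by (rule lower_inf[OF p a0 aanti H(1) smR])
  define R where "R = suminf (lorentz_terms p s x)"
  define M where "M = suminf (max_lorentz_terms p s x)"
  define q where "q = conj_exp p"
  define z where "z = zeta_real (s / conj_exp p + 1)"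
  have s0: "s > 0" using p by simp
  have q0: "q > 0" using p by (simp add: q_def conj_exp_def)
  have R0: "R \<ge> 0" unfolding R_def Req by (rule suminf_nonneg[OF smR]) simp
  have M0: "M \<ge> 0" unfolding M_def Meq by (rule suminf_nonneg[OF H(1)]) simp
  have up: "M \<le> q powr s * R" using H(2) unfolding M_def R_def Meq Req q_def conj_exp_def .
  have lo: "z * R \<le> M" using low unfolding M_def R_def Meq Req z_def zeta_arg[OF p(1)] .
  have al1: "s - s/p + 1 > 1" using p by (simp add: field_simps)
  have z0: "z \<ge> 0" unfolding z_def zeta_arg[OF p(1)] by (rule zeta_nonneg[OF al1])
  have "M powr (1/s) \<le> (q powr s * R) powr (1/s)" using up R0 q0 s0 M0 by (intro powr_mono2) auto
  also have "(q powr s * R) powr (1/s) = (q powr s) powr (1/s) * R powr (1/s)"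
    by (rule powr_mult; use R0 q0 in simp)
  also have "(q powr s) powr (1/s) = q" using q0 s0 by (simp add: powr_powr)
  finally have U: "M powr (1/s) \<le> q * R powr (1/s)" .
  have "z powr (1/s) * R powr (1/s) = (z * R) powr (1/s)" using z0 R0 by (simp add: powr_mult)
  also have "\<dots> \<le> M powr (1/s)" using lo z0 R0 s0 by (intro powr_mono2) auto
  finally have L: "z powr (1/s) * R powr (1/s) \<le> M powr (1/s)" .
  show ?thesis using U L
    by (simp add: lorentz_norm_def max_lorentz_norm_def R_def M_def q_def z_def)
qed



lemma part2:
  fixes p s c :: real
  assumes p: "1 < p" "p \<le> s"
    and H: "\<forall>x. in_lorentz p s x \<longrightarrow> c * lorentz_norm p s x \<le> max_lorentz_norm p s x"
  shows "c \<le> zeta_real (s / conj_exp p + 1) powr (1 / s)"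
proof -
  define x :: "nat \<Rightarrow> complex" where "x k = (if k = 1 then 1 else 0)" for k
  have s0: "s > 0" using p by simp
  have anti: "norm (x j) \<le> norm (x i)" if "1 \<le> i" "i \<le> j" for i j
    using that by (auto simp: x_def)
  have rx: "rearr x n = (if n = 1 then 1 else 0)" if "n \<ge> 1" for n
  proof -
    have "rearr x n = norm (x n)" by (rule rearr_sorted) (use anti that in auto)
    then show ?thesis by (simp add: x_def)
  qed
  have Lt: "lorentz_terms p s x = (\<lambda>n. if n = 0 then 1 else 0)"
  proof
    fix n show "lorentz_terms p s x n = (if n = 0 then 1 else 0)"
      using rx[of "Suc n"] s0 by (simp add: lorentz_terms_def)
  qed
  have Ls: "lorentz_terms p s x sums 1"
    unfolding Lt using sums_single[of 0 "\<lambda>_. 1::real"] by simp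
  have lim: "(\<lambda>n. norm (x n)) \<longlonglongrightarrow> 0"
    by (rule tendsto_eventually) (auto simp: x_def eventually_sequentially intro!: exI[of _ 2])
  have inl: "in_lorentz p s x" using lim Ls by (auto simp: in_lorentz_def sums_summable)
  have Ln: "lorentz_norm p s x = 1"
    using sums_unique[OF Ls] by (simp add: lorentz_norm_def)
  have S1: "(\<Sum>k=1..Suc n. rearr x k) = 1" for n
  proof (induction n)
    case 0 then show ?case using rx[of 1] by simp
  next
    case (Suc n) then show ?case using rx[of "Suc (Suc n)"] by simp
  qed
  have Mt: "max_lorentz_terms p s x n = 1 / real (Suc n) powr (s / conj_exp p + 1)" for n
  proof -
    have np: "real (Suc n) > 0" by simp
    have "max_lorentz_terms p s x n = real (Suc n) powr (s/p-1) * (1 / real (Suc n)) powr s"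
      by (simp only: max_lorentz_terms_def S1)
    also have "(1 / real (Suc n)) powr s = real (Suc n) powr (-s)"
      using np by (simp add: powr_divide powr_minus_divide)
    also have "real (Suc n) powr (s/p-1) * real (Suc n) powr (-s) = real (Suc n) powr (-(s - s/p + 1))"
    proof -
      have e: "s/p - 1 + -s = -(s - s/p + 1)" by simp
      show ?thesis by (simp only: powr_add[symmetric] e)
    qed
    also have "\<dots> = 1 / real (Suc n) powr (s / conj_exp p + 1)"
      unfolding zeta_arg[OF p(1)] by (rule powr_minus_divide)
    finally show ?thesis .
  qed
  have Mn: "max_lorentz_norm p s x = zeta_real (s / conj_exp p + 1) powr (1 / s)"
    unfolding max_lorentz_norm_def zeta_real_def Mt ..
  show ?thesis using H inl Ln Mn by auto
qed



lemma max_summable: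
  fixes p s :: real
  assumes p: "1 < p" "p \<le> s" and x: "in_lorentz p s x"
  shows "summable (max_lorentz_terms p s x)"
proof -
  have lim: "(\<lambda>n. norm (x n)) \<longlonglongrightarrow> 0" and smL: "summable (lorentz_terms p s x)"
    using x by (auto simp: in_lorentz_def)
  define a where "a k = (if k = 0 then 0 else rearr x k)" for k
  have a0: "a k \<ge> 0" for k using rearr_basic(1)[OF lim, of k] by (simp add: a_def)
  have Req: "lorentz_terms p s x = (\<lambda>n. real (Suc n) powr (s/p-1) * a (Suc n) powr s)"
    by (rule ext) (simp add: lorentz_terms_def a_def)
  have Meq: "max_lorentz_terms p s x = (\<lambda>n. real (Suc n) powr (s/p-1) * ((\<Sum>k=1..Suc n. a k)/real (Suc n)) powr s)"
  proof (rule ext)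
    fix n
    have "(\<Sum>k=1..Suc n. a k) = (\<Sum>k=1..Suc n. rearr x k)" by (rule sum.cong) (auto simp: a_def)
    then show "max_lorentz_terms p s x n = real (Suc n) powr (s/p-1) * ((\<Sum>k=1..Suc n. a k)/real (Suc n)) powr s"
      by (simp add: max_lorentz_terms_def)
  qed
  have smR: "summable (\<lambda>n. real (Suc n) powr (s/p-1) * a (Suc n) powr s)" using smL Req by simp
  show ?thesis unfolding Meq by (rule hardy_inf(1)[OF p a0 smR])
qed

lemma harm_unbounded: "\<exists>N. (\<Sum>n<N. 1 / real (Suc n)) > B"
proof (rule ccontr)
  assume "\<not> ?thesis"
  then have b: "(\<Sum>n<N. 1 / real (Suc n)) \<le> B" for N by (simp add: not_less)
  have "summable (\<lambda>n. 1 / real (Suc n))" by (rule summableI_nonneg_bounded[OF _ b]) simp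
  then have "summable (\<lambda>n. inverse (real (Suc n)))" by (simp add: inverse_eq_divide)
  then have "summable (\<lambda>n. inverse (real n))" by (rule summable_Suc_iff[THEN iffD1])
  then show False using not_summable_harmonic[where 'a=real] by simp
qed

lemma bern_low:
  fixes s t :: real
  assumes s: "s \<ge> 1" and t: "0 \<le> t" "t \<le> 1"
  shows "1 - s*t \<le> (1-t) powr s"
proof (cases "t = 1")
  case True then show ?thesis using s by simp
next
  case False
  then have t1: "t < 1" using t by simp
  define u where "u = (1-t) powr s"
  have u0: "u > 0" using t1 by (simp add: u_def)
  have "-1 < u - 1" using u0 by simp
  from bern_powr[of "1/s" "u-1", OF _ _ this] s
  have "u powr (1/s) \<le> 1 + (1/s)*(u-1)" by simp
  moreover have "u powr (1/s) = 1 - t" using t1 s by (simp add: u_def powr_powr)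
  ultimately have "1 - t \<le> 1 + (u-1)/s" by simp
  then have "s*(1-t) \<le> s + (u - 1)" using s by (simp add: field_simps)
  then show ?thesis by (simp add: u_def algebra_simps)
qed

lemma A_lower:
  fixes p :: real
  assumes p: "1 < p"
  shows "p/(p-1) * (real (m+1) powr (1 - 1/p) - 1) \<le> (\<Sum>k=1..m. real k powr (-1/p))"
proof (induction m)
  case 0 then show ?case by simp
next
  case (Suc m)
  define q where "q = p/(p-1)"
  define g where "g = 1 - 1/p"
  define k where "k = real (m+1)"
  have k1: "k \<ge> 1" by (simp add: k_def)
  have g01: "0 \<le> g" "g \<le> 1" using p by (auto simp: g_def field_simps)
  have qg: "q * g = 1" using p by (simp add: q_def g_def field_simps)
  have q0: "q > 0" using p by (simp add: q_def)
  have "k * (1 + 1/k) = k + 1" using k1 by (simp add: field_simps)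
  then have "(k+1) powr g = (k * (1 + 1/k)) powr g" by simp
  also have "\<dots> = k powr g * (1 + 1/k) powr g" by (rule powr_mult; use k1 in simp)
  also have "\<dots> \<le> k powr g * (1 + g * (1/k))"
  proof (rule mult_left_mono)
    have "-1 < 1/k" using k1 by (smt (verit) divide_pos_pos)
    then show "(1 + 1/k) powr g \<le> 1 + g * (1/k)" using bern_powr[OF g01] by blast
  qed simp
  also have "\<dots> = k powr g + g * (k powr g / k)" by (simp add: algebra_simps)
  also have "k powr g / k = k powr (-1/p)"
  proof -
    have "k powr (g - 1) = k powr g / k powr 1" by (rule powr_diff)
    moreover have "k powr 1 = k" using k1 by simp
    moreover have "g - 1 = -1/p" by (simp add: g_def)
    ultimately show ?thesis by simp
  qed
  finally have "(k+1) powr g \<le> k powr g + g * k powr (-1/p)" .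
  then have "q * ((k+1) powr g - k powr g) \<le> q * (g * k powr (-1/p))"
    using q0 by (intro mult_left_mono) auto
  then have step: "q * ((k+1) powr g - k powr g) \<le> k powr (-1/p)" using qg by (simp add: mult.assoc[symmetric])
  have "q * (real (Suc m + 1) powr g - 1) = q * (real (m+1) powr g - 1) + q * ((k+1) powr g - k powr g)"
    by (simp add: k_def algebra_simps)
  also have "\<dots> \<le> (\<Sum>k=1..m. real k powr (-1/p)) + k powr (-1/p)"
    using Suc.IH step by (simp add: q_def g_def)
  also have "\<dots> = (\<Sum>k=1..Suc m. real k powr (-1/p))" by (simp add: k_def)
  finally show ?case by (simp add: q_def g_def)
qed



lemma mt_lower:
  fixes p s m A :: real
  assumes p: "1 < p" "p \<le> s" and m: "m \<ge> 1"
    and A: "A \<ge> p/(p-1) * (m powr (1 - 1/p) - 1)"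
  shows "(p/(p-1)) powr s * (1/m - s * m powr (-(2 - 1/p))) \<le> m powr (s/p-1) * (A/m) powr s"
proof -
  define q where "q = p/(p-1)"
  define g where "g = 1 - 1/p"
  define t where "t = m powr (-g)"
  have m0: "m > 0" using m by simp
  have s1: "s \<ge> 1" using p by simp
  have q0: "q > 0" using p by (simp add: q_def)
  have g0: "g \<ge> 0" using p by (simp add: g_def)
  have t0: "t > 0" using m0 by (simp add: t_def)
  have t1: "t \<le> 1" unfolding t_def using ge_one_powr_ge_zero[OF m g0] by (simp add: powr_minus_divide divide_le_eq)
  have e5: "m powr g * t = 1" using m0 by (simp add: t_def powr_add[symmetric])
  have e3: "m powr g / m = m powr (-1/p)"
  proof -
    have "m powr (g - 1) = m powr g / m powr 1" by (rule powr_diff)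
    moreover have "m powr 1 = m" using m0 by simp
    moreover have "g - 1 = -1/p" by (simp add: g_def)
    ultimately show ?thesis by simp
  qed
  have e1: "m powr (s/p-1) * m powr (-s/p) = 1/m"
  proof -
    have "m powr (s/p-1) * m powr (-s/p) = m powr (-1)" by (simp add: powr_add[symmetric])
    then show ?thesis using m0 by (simp add: powr_minus_divide)
  qed
  have e2: "(m powr (-1/p)) powr s = m powr (-s/p)" by (simp add: powr_powr)
  have e4: "1/m * t = m powr (-(2 - 1/p))"
  proof -
    have ee: "-1 + -g = -(2 - 1/p)" by (simp add: g_def)
    have "m powr (-1) * m powr (-g) = m powr (-(2 - 1/p))"
      by (simp only: powr_add[symmetric] ee)
    moreover have "m powr (-1) = 1/m" using m0 by (simp add: powr_minus_divide)
    ultimately show ?thesis by (simp add: t_def)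
  qed
  have "m powr g - 1 = m powr g * (1 - t)" using e5 by (simp add: algebra_simps)
  then have "A \<ge> q * (m powr g * (1 - t))" using A by (simp add: q_def g_def)
  then have "A/m \<ge> q * (m powr g * (1 - t)) / m" using m0 by (simp add: divide_right_mono)
  also have "q * (m powr g * (1 - t)) / m = q * (m powr g / m) * (1 - t)" by simp
  also have "\<dots> = q * (m powr (-1/p)) * (1 - t)" unfolding e3 ..
  finally have bl: "q * m powr (-1/p) * (1 - t) \<le> A/m" .
  have bl0: "0 \<le> q * m powr (-1/p) * (1 - t)" using q0 t1 by simp
  have "(q * m powr (-1/p) * (1 - t)) powr s \<le> (A/m) powr s"
    using bl bl0 s1 by (intro powr_mono2) auto
  moreover have "(q * m powr (-1/p) * (1 - t)) powr s = q powr s * m powr (-s/p) * (1-t) powr s"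
  proof -
    have "(q * m powr (-1/p) * (1 - t)) powr s = (q * m powr (-1/p)) powr s * (1-t) powr s"
      by (rule powr_mult; use q0 t1 in simp)
    also have "(q * m powr (-1/p)) powr s = q powr s * (m powr (-1/p)) powr s"
      by (rule powr_mult; use q0 in simp)
    finally show ?thesis using e2 by simp
  qed
  ultimately have bs: "q powr s * m powr (-s/p) * (1-t) powr s \<le> (A/m) powr s" by simp
  have "q powr s * (1/m - s * m powr (-(2 - 1/p))) = q powr s * (1/m) * (1 - s*t)"
    unfolding e4[symmetric] using m0 by (simp add: field_simps)
  also have "\<dots> \<le> q powr s * (1/m) * (1-t) powr s"
    using bern_low[OF s1 _ t1] t0 m0 by (intro mult_left_mono) auto
  also have "\<dots> = m powr (s/p-1) * (q powr s * m powr (-s/p) * (1-t) powr s)"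
    using e1[symmetric] by (simp add: algebra_simps)
  also have "\<dots> \<le> m powr (s/p-1) * (A/m) powr s"
    using bs by (intro mult_left_mono) auto
  finally show ?thesis by (simp add: q_def)
qed



lemma example_N:
  fixes p s :: real and N :: nat
  assumes p: "1 < p" "p \<le> s"
  defines "x \<equiv> (\<lambda>k. if 1 \<le> k \<and> k \<le> N then complex_of_real (real k powr (-1/p)) else 0)"
  defines "H \<equiv> (\<Sum>n<N. 1 / real (Suc n))"
  defines "K \<equiv> (\<Sum>n. real (n+1) powr (-(2 - 1/p)))"
  shows "in_lorentz p s x" and "lorentz_norm p s x = H powr (1/s)"
    and "\<exists>M. M \<ge> 0 \<and> max_lorentz_norm p s x = M powr (1/s) \<and> (p/(p-1)) powr s * (H - s*K) \<le> M"
proof -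
  have s1: "s > 1" using p by simp
  have nx: "norm (x k) = (if 1 \<le> k \<and> k \<le> N then real k powr (-1/p) else 0)" for k
    by (simp add: x_def)
  have anti: "norm (x j) \<le> norm (x i)" if "1 \<le> i" "i \<le> j" for i j
  proof (cases "j \<le> N")
    case True
    then have "real j powr (-1/p) \<le> real i powr (-1/p)"
      using that p by (intro powr_mono2') auto
    then show ?thesis using that True by (simp add: nx)
  next
    case False then show ?thesis by (simp add: nx)
  qed
  have rx: "rearr x k = norm (x k)" if "k \<ge> 1" for k
    by (rule rearr_sorted) (use anti that in auto)
  have Lt: "lorentz_terms p s x = (\<lambda>n. if n \<in> {..<N} then 1 / real (Suc n) else 0)"
  proof
    fix n
    show "lorentz_terms p s x n = (if n \<in> {..<N} then 1 / real (Suc n) else 0)"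
    proof (cases "n < N")
      case True
      define m where "m = real (Suc n)"
      have m0: "m > 0" by (simp add: m_def)
      have "lorentz_terms p s x n = m powr (s/p-1) * (m powr (-1/p)) powr s"
        using True rx[of "Suc n"] by (simp add: lorentz_terms_def nx m_def)
      also have "(m powr (-1/p)) powr s = m powr (-1/p * s)" by (rule powr_powr)
      also have "m powr (s/p-1) * m powr (-1/p * s) = m powr (-1)"
      proof -
        have ee: "s/p - 1 + (-1/p * s) = (-1::real)" by (simp add: field_simps)
        show ?thesis by (simp only: powr_add[symmetric] ee)
      qed
      also have "m powr (-1) = 1/m" using m0 by (simp add: powr_minus_divide)
      finally show ?thesis using True by (simp add: m_def)
    next
      case False
      then show ?thesis using rx[of "Suc n"] s1 by (simp add: lorentz_terms_def nx)
    qed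
  qed
  have Ls: "lorentz_terms p s x sums H"
    unfolding Lt H_def by (rule sums_If_finite_set) simp
  have lim: "(\<lambda>n. norm (x n)) \<longlonglongrightarrow> 0"
    by (rule tendsto_eventually) (auto simp: nx eventually_sequentially intro!: exI[of _ "Suc N"])
  show inl: "in_lorentz p s x" using lim Ls by (auto simp: in_lorentz_def sums_summable)
  show "lorentz_norm p s x = H powr (1/s)"
    using sums_unique[OF Ls] by (simp add: lorentz_norm_def)
  define M where "M = suminf (max_lorentz_terms p s x)"
  have smM: "summable (max_lorentz_terms p s x)" by (rule max_summable[OF p inl])
  have mt0: "max_lorentz_terms p s x n \<ge> 0" for n by (simp add: max_lorentz_terms_def)
  have M0: "M \<ge> 0" unfolding M_def by (rule suminf_nonneg[OF smM mt0])
  have mtl: "(p/(p-1)) powr s * (1/real (Suc n) - s * real (Suc n) powr (-(2 - 1/p))) \<le> max_lorentz_terms p s x n"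
    if "n < N" for n
  proof -
    define A where "A = (\<Sum>k=1..Suc n. rearr x k)"
    have "A = (\<Sum>k=1..Suc n. real k powr (-1/p))"
      unfolding A_def by (rule sum.cong) (use that in \<open>auto simp: rx nx\<close>)
    also have "\<dots> \<ge> p/(p-1) * (real (Suc n + 1) powr (1 - 1/p) - 1)" by (rule A_lower[OF p(1)])
    finally have A1: "p/(p-1) * (real (Suc n + 1) powr (1 - 1/p) - 1) \<le> A" .
    have "real (Suc n) powr (1 - 1/p) \<le> real (Suc n + 1) powr (1 - 1/p)"
      using p by (intro powr_mono2) auto
    then have "p/(p-1) * (real (Suc n) powr (1 - 1/p) - 1) \<le> A"
      using A1 p by (smt (verit) divide_pos_pos mult_left_mono)
    from mt_lower[OF p _ this] show ?thesis by (simp add: max_lorentz_terms_def A_def)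
  qed
  have Kle: "(\<Sum>n<N. real (Suc n) powr (-(2 - 1/p))) \<le> K"
  proof -
    have al: "2 - 1/p > 1" using p by (simp add: field_simps)
    have "(\<Sum>n<N. real (n+1) powr (-(2 - 1/p))) \<le> K"
      unfolding K_def by (rule sum_le_suminf[OF summable_zeta_terms[OF al]]) auto
    then show ?thesis by simp
  qed
  have "(p/(p-1)) powr s * (H - s*K) \<le> (p/(p-1)) powr s * (H - s * (\<Sum>n<N. real (Suc n) powr (-(2 - 1/p))))"
    using Kle s1 by (intro mult_left_mono) auto
  also have "\<dots> = (\<Sum>n<N. (p/(p-1)) powr s * (1/real (Suc n) - s * real (Suc n) powr (-(2 - 1/p))))"
    by (simp add: H_def sum_distrib_left sum_subtractf algebra_simps)
  also have "\<dots> \<le> (\<Sum>n<N. max_lorentz_terms p s x n)" by (rule sum_mono) (use mtl in auto)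
  also have "\<dots> \<le> M" unfolding M_def by (rule sum_le_suminf[OF smM]) (use mt0 in auto)
  finally show "\<exists>M. M \<ge> 0 \<and> max_lorentz_norm p s x = M powr (1/s) \<and> (p/(p-1)) powr s * (H - s*K) \<le> M"
    using M0 by (auto simp: M_def max_lorentz_norm_def)
qed



lemma part3:
  fixes p s C :: real
  assumes p: "1 < p" "p \<le> s"
    and HC: "\<forall>x. in_lorentz p s x \<longrightarrow> max_lorentz_norm p s x \<le> C * lorentz_norm p s x"
  shows "conj_exp p \<le> C"
proof (rule ccontr)
  assume "\<not> conj_exp p \<le> C"
  then have Cq: "C < p/(p-1)" by (simp add: conj_exp_def)
  define q where "q = p/(p-1)"
  define K where "K = (\<Sum>n. real (n+1) powr (-(2 - 1/p)))"
  have s0: "s > 0" using p by simp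
  have q0: "q > 0" using p by (simp add: q_def)
  have al: "2 - 1/p > 1" using p by (simp add: field_simps)
  have K0: "K \<ge> 0" unfolding K_def by (rule suminf_nonneg[OF summable_zeta_terms[OF al]]) simp
  have main: "C powr s * H \<ge> M" if "H > 0" "M \<ge> 0" "M powr (1/s) \<le> C * H powr (1/s)" for H M
  proof -
    have C0: "C \<ge> 0"
    proof (rule ccontr)
      assume "\<not> C \<ge> 0"
      then have "C * H powr (1/s) < 0" using that(1) by (simp add: mult_neg_pos)
      moreover have "M powr (1/s) \<ge> 0" by simp
      ultimately show False using that(3) by simp
    qed
    have "(M powr (1/s)) powr s \<le> (C * H powr (1/s)) powr s"
      using that(3) s0 by (intro powr_mono2) auto
    moreover have "(M powr (1/s)) powr s = M" using that(2) s0 by (simp add: powr_powr)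
    moreover have "(C * H powr (1/s)) powr s = C powr s * H"
    proof -
      have "(C * H powr (1/s)) powr s = C powr s * (H powr (1/s)) powr s"
        by (rule powr_mult; use C0 in simp)
      also have "(H powr (1/s)) powr s = H" using that(1) s0 by (simp add: powr_powr)
      finally show ?thesis .
    qed
    ultimately show ?thesis by simp
  qed
  show False
  proof (cases "C < 0")
    case True
    define x :: "nat \<Rightarrow> complex" where "x = (\<lambda>k. if 1 \<le> k \<and> k \<le> 1 then complex_of_real (real k powr (-1/p)) else 0)"
    have H1: "(\<Sum>n<1. 1 / real (Suc n)) = 1" by simp
    note E = example_N[OF p, of 1, folded x_def, unfolded H1]
    obtain M where M: "M \<ge> 0" "max_lorentz_norm p s x = M powr (1/s)" using E(3) by blast
    have "max_lorentz_norm p s x \<le> C * lorentz_norm p s x" using HC E(1) by blast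
    then have "M powr (1/s) \<le> C" using M E(2) by simp
    moreover have "M powr (1/s) \<ge> 0" by simp
    ultimately show False using True by simp
  next
    case False
    then have C0: "C \<ge> 0" by simp
    have Cs: "C powr s < q powr s" using Cq C0 s0 by (intro powr_less_mono2) (auto simp: q_def)
    define B where "B = q powr s * s * K / (q powr s - C powr s)"
    obtain N where N: "(\<Sum>n<N. 1 / real (Suc n)) > max B 1" using harm_unbounded by blast
    define H where "H = (\<Sum>n<N. 1 / real (Suc n))"
    define x :: "nat \<Rightarrow> complex" where "x = (\<lambda>k. if 1 \<le> k \<and> k \<le> N then complex_of_real (real k powr (-1/p)) else 0)"
    note E = example_N[OF p, of N, folded x_def H_def K_def]
    obtain M where M: "M \<ge> 0" "max_lorentz_norm p s x = M powr (1/s)" "q powr s * (H - s*K) \<le> M"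
      using E(3) unfolding q_def by blast
    have HB: "H > B" "H > 0" using N by (auto simp: H_def)
    have "max_lorentz_norm p s x \<le> C * lorentz_norm p s x" using HC E(1) by blast
    then have "M powr (1/s) \<le> C * H powr (1/s)" using M E(2) by simp
    from main[OF HB(2) M(1) this] have "M \<le> C powr s * H" .
    with M(3) have "q powr s * (H - s*K) \<le> C powr s * H" by linarith
    then have "(q powr s - C powr s) * H \<le> q powr s * s * K" by (simp add: algebra_simps)
    then have "H \<le> B" using Cs by (simp add: B_def field_simps)
    then show False using HB by simp
  qed
qed

theorem corollary3p6:
  fixes p s :: real
  assumes "1 < p" and "p \<le> s"
  shows "(\<forall>x. in_lorentz p s x \<longrightarrow>
            zeta_real (s / conj_exp p + 1) powr (1 / s) * lorentz_norm p s x \<le> max_lorentz_norm p s x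
          \<and> max_lorentz_norm p s x \<le> conj_exp p * lorentz_norm p s x)
       \<and> (\<forall>c. (\<forall>x. in_lorentz p s x \<longrightarrow> c * lorentz_norm p s x \<le> max_lorentz_norm p s x)
              \<longrightarrow> c \<le> zeta_real (s / conj_exp p + 1) powr (1 / s))
       \<and> (\<forall>C. (\<forall>x. in_lorentz p s x \<longrightarrow> max_lorentz_norm p s x \<le> C * lorentz_norm p s x)
              \<longrightarrow> conj_exp p \<le> C)"
  using part1[OF assms] part2[OF assms] part3[OF assms] by blast


end
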